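(* Assume $Q$ is connected. Each of the following conditions implies $L_{-1}=0$: (i) $Q$ has no loop; (ii) for every loop $a$ of $Q$ (arrow with $s(a)=t(a)$), the characteristic of $k$ does not divide the integer $m\ge2$ such that $a^m\in Z$ and $a^{m-1}\in B$; (iii) $k$ has characteristic $0$; (iv) $Z=Q_m$ for some $m\ge2$ (so $\Lambda=kQ/\langle Q_m\rangle$ is a truncated quiver algebra) and $Q$ is not the quiver with one vertex and one loop; (v) $Q$ is the quiver with one vertex and one loop, $Z=Q_m$ and the characteristic of $k$ does not divide $m\ge2$.
   Context: Let $k$ be an algebraically closed field and $Q$ a finite quiver; $Q_n$ is the set of paths of length $n$ ($Q_0$ vertices, $Q_1$ arrows), $s,t$ source and terminus. Let $Z$ be a minimal set of paths of length $\ge2$ (no proper subpath of an element of $Z$ lies in $Z$) with $\Lambda=kQ/\langle Z\rangle$ finite dimensional. $B$ is the set of paths (vertices included) not containing an element of $Z$ as a subpath. Paths are parallel if they have the same source and terminus; $Q_1//Q_0$ is the set of pairs $(a,e)$ with $a$ a loop at the vertex $e$, and $k(X//Y)$ is the vector space with basis the pairs of parallel paths in $X\times Y$. For a path $\varepsilon$ and a pair $(a,\gamma)$ of parallel paths with $a\in Q_1$, $\gamma\in B$, $\varepsilon^{(a,\gamma)}$ is the sum of all paths in $B$ obtained by replacing one occurrence of $a$ in $\varepsilon$ by $\gamma$ ($0$ if none), and $(\eta,\varepsilon^{(a,\gamma)})=\sum_i(\eta,\varepsilon_i)$ if $\varepsilon^{(a,\gamma)}=\sum_i\varepsilon_i$.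 $\psi_1:k(Q_1//B)\to k(Z//B)$ is $(a,\gamma)\mapsto\sum_{p\in Z}(p,p^{(a,\gamma)})$, and $L_{-1}:=k(Q_1//Q_0)\cap\operatorname{Ker}\psi_1$ (the degree $-1$ component of $\operatorname{H}^1(\Lambda,\Lambda)$). *)

theory Defs
  imports "HOL-Computational_Algebra.Polynomial" "HOL-Library.Sublist"
begin

text \<open>Paths of length 0 (vertices) are handled separately: the set of all paths is encoded in the
 sum type  'v + 'a list, with Inl e the trivial path at e and Inr p a path of positive length.\<close>

definition alg_closed :: "'k::field itself \<Rightarrow> bool" where
  "alg_closed _ \<longleftrightarrow> (\<forall>p :: 'k poly. degree p \<ge> 1 \<longrightarrow> (\<exists>x. poly p x = 0))"

definition quiver :: "'v set \<Rightarrow> 'a set \<Rightarrow> ('a \<Rightarrow> 'v) \<Rightarrow> ('a \<Rightarrow> 'v) \<Rightarrow> bool" where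
  "quiver V A s t \<longleftrightarrow> finite V \<and> finite A \<and> s ` A \<subseteq> V \<and> t ` A \<subseteq> V"

definition connected_quiver :: "'v set \<Rightarrow> 'a set \<Rightarrow> ('a \<Rightarrow> 'v) \<Rightarrow> ('a \<Rightarrow> 'v) \<Rightarrow> bool" where
  "connected_quiver V A s t \<longleftrightarrow> V \<noteq> {} \<and>
     (\<forall>u\<in>V. \<forall>v\<in>V. (u, v) \<in> ({(s a, t a) | a. a \<in> A} \<union> {(t a, s a) | a. a \<in> A})\<^sup>*)"

definition qpath :: "'a set \<Rightarrow> ('a \<Rightarrow> 'v) \<Rightarrow> ('a \<Rightarrow> 'v) \<Rightarrow> 'a list \<Rightarrow> bool" where
  "qpath A s t p \<longleftrightarrow> p \<noteq> [] \<and> set p \<subseteq> A \<and>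
     (\<forall>i. Suc i < length p \<longrightarrow> t (p ! i) = s (p ! Suc i))"

definition paths_of_length :: "'a set \<Rightarrow> ('a \<Rightarrow> 'v) \<Rightarrow> ('a \<Rightarrow> 'v) \<Rightarrow> nat \<Rightarrow> 'a list set" where
  "paths_of_length A s t n = {p. qpath A s t p \<and> length p = n}"

definition is_loop :: "'a set \<Rightarrow> ('a \<Rightarrow> 'v) \<Rightarrow> ('a \<Rightarrow> 'v) \<Rightarrow> 'a \<Rightarrow> bool" where
  "is_loop A s t a \<longleftrightarrow> a \<in> A \<and> s a = t a"

definition minimal_relations :: "'a set \<Rightarrow> ('a \<Rightarrow> 'v) \<Rightarrow> ('a \<Rightarrow> 'v) \<Rightarrow> 'a list set \<Rightarrow> bool" where
  "minimal_relations A s t Z \<longleftrightarrow>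
     (\<forall>p\<in>Z. qpath A s t p \<and> length p \<ge> 2) \<and>
     (\<forall>p\<in>Z. \<forall>q\<in>Z. \<not> strict_sublist q p)"

definition Bset :: "'v set \<Rightarrow> 'a set \<Rightarrow> ('a \<Rightarrow> 'v) \<Rightarrow> ('a \<Rightarrow> 'v) \<Rightarrow> 'a list set \<Rightarrow> ('v + 'a list) set" where
  "Bset V A s t Z = Inl ` V \<union> Inr ` {p. qpath A s t p \<and> (\<forall>z\<in>Z. \<not> sublist z p)}"

definition replace_at :: "'a list \<Rightarrow> nat \<Rightarrow> ('v + 'a list) \<Rightarrow> ('v + 'a list)" where
  "replace_at p i \<gamma> = (case \<gamma> of
       Inl e \<Rightarrow> (if length p = 1 then Inl e else Inr (take i p @ drop (Suc i) p))
     | Inr q \<Rightarrow> Inr (take i p @ q @ drop (Suc i) p))"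

text \<open>(eta, p^(a,gamma)): the multiplicity of eta in p^(a,gamma).\<close>
definition occ_coeff :: "('v + 'a list) set \<Rightarrow> 'a list \<Rightarrow> 'a \<Rightarrow> ('v + 'a list) \<Rightarrow> ('v + 'a list) \<Rightarrow> nat" where
  "occ_coeff B p a \<gamma> \<eta> =
     card {i. i < length p \<and> p ! i = a \<and> replace_at p i \<gamma> = \<eta> \<and> \<eta> \<in> B}"

definition loop_pairs :: "'v set \<Rightarrow> 'a set \<Rightarrow> ('a \<Rightarrow> 'v) \<Rightarrow> ('a \<Rightarrow> 'v) \<Rightarrow> ('a \<times> 'v) set" where
  "loop_pairs V A s t = {(a, e). a \<in> A \<and> e \<in> V \<and> s a = e \<and> t a = e}"

text \<open>k(Q_1//Q_0): functions supported on loop_pairs (coordinates w.r.t. the basis).\<close>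
definition kQ1Q0 :: "'v set \<Rightarrow> 'a set \<Rightarrow> ('a \<Rightarrow> 'v) \<Rightarrow> ('a \<Rightarrow> 'v) \<Rightarrow> ('a \<times> 'v \<Rightarrow> 'k::field) set" where
  "kQ1Q0 V A s t = {x. \<forall>y. y \<notin> loop_pairs V A s t \<longrightarrow> x y = 0}"

text \<open>psi_1 restricted to k(Q_1//Q_0), with values in k(Z//B) given as coordinate functions on
 Z \<times> B (coordinates at non-basis pairs are 0). Pairs (p, eta) with p in Z and eta in B
 that are not parallel automatically get coefficient 0.\<close>
definition psi1 :: "'v set \<Rightarrow> 'a set \<Rightarrow> ('a \<Rightarrow> 'v) \<Rightarrow> ('a \<Rightarrow> 'v) \<Rightarrow> 'a list set \<Rightarrow>
     ('a \<times> 'v \<Rightarrow> 'k::field) \<Rightarrow> ('a list \<times> ('v + 'a list) \<Rightarrow> 'k)" where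
  "psi1 V A s t Z x = (\<lambda>(p, \<eta>). if p \<in> Z \<and> \<eta> \<in> Bset V A s t Z then
      (\<Sum>(a, e)\<in>loop_pairs V A s t. x (a, e) * of_nat (occ_coeff (Bset V A s t Z) p a (Inl e) \<eta>))
      else 0)"

definition L_minus1 :: "'v set \<Rightarrow> 'a set \<Rightarrow> ('a \<Rightarrow> 'v) \<Rightarrow> ('a \<Rightarrow> 'v) \<Rightarrow> 'a list set \<Rightarrow>
     ('a \<times> 'v \<Rightarrow> 'k::field) set" where
  "L_minus1 V A s t Z = {x \<in> kQ1Q0 V A s t. \<forall>y. psi1 V A s t Z x y = 0}"

end

theory Submission
  imports Defs
begin

lemma occ_zero:
  assumes "\<forall>i<length p. p ! i = c \<longrightarrow> replace_at p i \<gamma> \<noteq> \<eta>"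
  shows "occ_coeff B p c \<gamma> \<eta> = 0"
proof -
  have "{i. i < length p \<and> p ! i = c \<and> replace_at p i \<gamma> = \<eta> \<and> \<eta> \<in> B} = {}"
    using assms by auto
  then show ?thesis unfolding occ_coeff_def by simp
qed

lemma psi1_single:
  assumes q: "quiver V A s t" and p: "p \<in> Z" and eta: "\<eta> \<in> Bset V A s t Z"
    and a: "a \<in> A" "s a = t a"
    and oth: "\<And>c. c \<in> A \<Longrightarrow> s c = t c \<Longrightarrow> c \<noteq> a \<Longrightarrow>
               occ_coeff (Bset V A s t Z) p c (Inl (s c)) \<eta> = 0"
  shows "psi1 V A s t Z x (p, \<eta>) = x (a, s a) * of_nat (occ_coeff (Bset V A s t Z) p a (Inl (s a)) \<eta>)"
proof -
  let ?L = "loop_pairs V A s t"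
  let ?f = "\<lambda>(c, e). x (c, e) * of_nat (occ_coeff (Bset V A s t Z) p c (Inl e) \<eta>)"
  have fin: "finite ?L"
  proof (rule finite_subset)
    show "?L \<subseteq> A \<times> V" unfolding loop_pairs_def by auto
    show "finite (A \<times> V)" using q unfolding quiver_def by auto
  qed
  have mem: "(a, s a) \<in> ?L" using a q unfolding loop_pairs_def quiver_def by auto
  have "psi1 V A s t Z x (p, \<eta>) = sum ?f ?L" using p eta by (simp add: psi1_def)
  also have "\<dots> = ?f (a, s a) + sum ?f (?L - {(a, s a)})" using sum.remove[OF fin mem, of ?f] by simp
  also have "sum ?f (?L - {(a, s a)}) = 0"
  proof (rule sum.neutral, rule ballI)
    fix y assume y: "y \<in> ?L - {(a, s a)}"
    obtain c e where ce: "y = (c, e)" by (cases y)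
    have "c \<in> A" "s c = t c" "e = s c" "c \<noteq> a" using y unfolding ce loop_pairs_def by auto
    then show "?f y = 0" using oth unfolding ce by simp
  qed
  finally show ?thesis by simp
qed

lemma qpath_rep:
  assumes "a \<in> A" "s a = t a" "n \<ge> 1"
  shows "qpath A s t (replicate n a)"
  using assms unfolding qpath_def by auto

lemma qpath_rep_snoc:
  assumes "a \<in> A" "s a = t a" "b \<in> A" "s b = s a"
  shows "qpath A s t (replicate n a @ [b])"
  using assms unfolding qpath_def by (auto simp: nth_append)

lemma qpath_cons_rep:
  assumes "a \<in> A" "s a = t a" "b \<in> A" "t b = s a"
  shows "qpath A s t (b # replicate n a)"
  using assms unfolding qpath_def by (auto simp: nth_Cons split: nat.splits)

lemma occ_rep:
  assumes "Inr (replicate (Suc n) a) \<in> B"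
  shows "occ_coeff B (replicate (Suc (Suc n)) a) a (Inl e) (Inr (replicate (Suc n) a)) = Suc (Suc n)"
proof -
  have "{i. i < length (replicate (Suc (Suc n)) a) \<and> replicate (Suc (Suc n)) a ! i = a \<and>
          replace_at (replicate (Suc (Suc n)) a) i (Inl e) = Inr (replicate (Suc n) a) \<and>
          Inr (replicate (Suc n) a) \<in> B} = {..<Suc (Suc n)}"
  proof (rule set_eqI, rule iffI)
    fix i assume "i \<in> {..<Suc (Suc n)}"
    then have "replicate i a @ replicate (Suc (Suc n) - Suc i) a = replicate (Suc n) a"
      by (simp add: replicate_add[symmetric])
    then show "i \<in> {i. i < length (replicate (Suc (Suc n)) a) \<and> replicate (Suc (Suc n)) a ! i = a \<and>
          replace_at (replicate (Suc (Suc n)) a) i (Inl e) = Inr (replicate (Suc n) a) \<and>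
          Inr (replicate (Suc n) a) \<in> B}"
      using assms \<open>i \<in> {..<Suc (Suc n)}\<close> by (simp add: replace_at_def min_def del: replicate_Suc)
  qed auto
  then show ?thesis unfolding occ_coeff_def by simp
qed

lemma occ_rep_other:
  assumes "c \<noteq> a"
  shows "occ_coeff B (replicate m a) c \<gamma> \<eta> = 0"
  using assms by (intro occ_zero) auto

lemma occ_snoc:
  assumes "Inr (replicate n a @ [b]) \<in> B" "b \<noteq> a"
  shows "occ_coeff B (replicate (Suc n) a @ [b]) a (Inl e) (Inr (replicate n a @ [b])) = Suc n"
proof -
  let ?p = "replicate (Suc n) a @ [b]"
  have "{i. i < length ?p \<and> ?p ! i = a \<and>
          replace_at ?p i (Inl e) = Inr (replicate n a @ [b]) \<and>
          Inr (replicate n a @ [b]) \<in> B} = {..<Suc n}"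
  proof (rule set_eqI, rule iffI)
    fix i assume i: "i \<in> {..<Suc n}"
    then have "replicate i a @ replicate (Suc n - Suc i) a = replicate n a"
      by (simp add: replicate_add[symmetric])
    then show "i \<in> {i. i < length ?p \<and> ?p ! i = a \<and>
          replace_at ?p i (Inl e) = Inr (replicate n a @ [b]) \<and>
          Inr (replicate n a @ [b]) \<in> B}"
      using assms i by (simp add: replace_at_def min_def nth_append del: replicate_Suc)
  next
    fix i assume "i \<in> {i. i < length ?p \<and> ?p ! i = a \<and>
          replace_at ?p i (Inl e) = Inr (replicate n a @ [b]) \<and>
          Inr (replicate n a @ [b]) \<in> B}"
    then show "i \<in> {..<Suc n}" using assms by (auto simp: nth_append simp del: replicate_Suc split: if_splits)
  qed
  then show ?thesis unfolding occ_coeff_def by simp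
qed

lemma occ_snoc_other:
  assumes "c \<noteq> a" "b \<noteq> a"
  shows "occ_coeff B (replicate (Suc n) a @ [b]) c (Inl e) (Inr (replicate n a @ [b])) = 0"
proof (rule occ_zero, intro allI impI)
  fix i assume i: "i < length (replicate (Suc n) a @ [b])" and c: "(replicate (Suc n) a @ [b]) ! i = c"
  then have "i = Suc n" using assms by (auto simp: nth_append simp del: replicate_Suc split: if_splits)
  then have "replace_at (replicate (Suc n) a @ [b]) i (Inl e) = Inr (replicate (Suc n) a)"
    by (simp add: replace_at_def)
  moreover have "replicate (Suc n) a \<noteq> replicate n a @ [b]"
    using assms by (metis last_replicate last_snoc nat.distinct(1))
  ultimately show "replace_at (replicate (Suc n) a @ [b]) i (Inl e) \<noteq> Inr (replicate n a @ [b])"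
    by simp
qed

lemma occ_cons:
  assumes "Inr (b # replicate n a) \<in> B" "b \<noteq> a"
  shows "occ_coeff B (b # replicate (Suc n) a) a (Inl e) (Inr (b # replicate n a)) = Suc n"
proof -
  let ?p = "b # replicate (Suc n) a"
  have "{i. i < length ?p \<and> ?p ! i = a \<and>
          replace_at ?p i (Inl e) = Inr (b # replicate n a) \<and>
          Inr (b # replicate n a) \<in> B} = Suc ` {..<Suc n}"
  proof (rule set_eqI, rule iffI)
    fix i assume i: "i \<in> Suc ` {..<Suc n}"
    then obtain j where j: "i = Suc j" "j < Suc n" by auto
    then have "replicate j a @ replicate (Suc n - Suc j) a = replicate n a"
      by (simp add: replicate_add[symmetric])
    then show "i \<in> {i. i < length ?p \<and> ?p ! i = a \<and>
          replace_at ?p i (Inl e) = Inr (b # replicate n a) \<and>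
          Inr (b # replicate n a) \<in> B}"
      using assms j by (simp add: replace_at_def min_def del: replicate_Suc)
  next
    fix i assume "i \<in> {i. i < length ?p \<and> ?p ! i = a \<and>
          replace_at ?p i (Inl e) = Inr (b # replicate n a) \<and>
          Inr (b # replicate n a) \<in> B}"
    then show "i \<in> Suc ` {..<Suc n}" using assms
      by (cases i) (auto simp del: replicate_Suc)
  qed
  then show ?thesis unfolding occ_coeff_def by (simp add: card_image)
qed

lemma occ_cons_other:
  assumes "c \<noteq> a" "b \<noteq> a"
  shows "occ_coeff B (b # replicate (Suc n) a) c (Inl e) (Inr (b # replicate n a)) = 0"
proof (rule occ_zero, intro allI impI)
  fix i assume i: "i < length (b # replicate (Suc n) a)" and c: "(b # replicate (Suc n) a) ! i = c"
  then have "i = 0" using assms by (cases i) (auto simp del: replicate_Suc)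
  then have "replace_at (b # replicate (Suc n) a) i (Inl e) = Inr (replicate (Suc n) a)"
    by (simp add: replace_at_def)
  then show "replace_at (b # replicate (Suc n) a) i (Inl e) \<noteq> Inr (b # replicate n a)"
    using assms by simp
qed


lemma psi_zero:
  assumes "x \<in> L_minus1 V A s t Z"
  shows "psi1 V A s t Z x y = 0"
  using assms unfolding L_minus1_def by (cases y) auto

lemma keyA:
  assumes q: "quiver V A s t" and x: "x \<in> L_minus1 V A s t Z" and a: "a \<in> A" "s a = t a"
    and z: "replicate (Suc (Suc n)) a \<in> Z" and b: "Inr (replicate (Suc n) a) \<in> Bset V A s t Z"
  shows "of_nat (Suc (Suc n)) * x (a, s a) = 0"
proof -
  have "psi1 V A s t Z x (replicate (Suc (Suc n)) a, Inr (replicate (Suc n) a))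
     = x (a, s a) * of_nat (occ_coeff (Bset V A s t Z) (replicate (Suc (Suc n)) a) a (Inl (s a)) (Inr (replicate (Suc n) a)))"
    by (rule psi1_single[OF q z b a]) (rule occ_rep_other)
  also have "\<dots> = x (a, s a) * of_nat (Suc (Suc n))" using occ_rep[OF b] by (simp del: of_nat_Suc)
  finally show ?thesis using psi_zero[OF x] by (simp add: mult.commute del: of_nat_Suc)
qed

lemma keyB:
  assumes q: "quiver V A s t" and x: "x \<in> L_minus1 V A s t Z" and a: "a \<in> A" "s a = t a"
    and ba: "b \<noteq> a"
    and z: "replicate (Suc n) a @ [b] \<in> Z" and b: "Inr (replicate n a @ [b]) \<in> Bset V A s t Z"
  shows "of_nat (Suc n) * x (a, s a) = 0"
proof -
  have "psi1 V A s t Z x (replicate (Suc n) a @ [b], Inr (replicate n a @ [b]))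
     = x (a, s a) * of_nat (occ_coeff (Bset V A s t Z) (replicate (Suc n) a @ [b]) a (Inl (s a)) (Inr (replicate n a @ [b])))"
    by (rule psi1_single[OF q z b a]) (rule occ_snoc_other[OF _ ba])
  also have "\<dots> = x (a, s a) * of_nat (Suc n)" using occ_snoc[OF b ba] by (simp del: of_nat_Suc)
  finally show ?thesis using psi_zero[OF x] by (simp add: mult.commute del: of_nat_Suc)
qed

lemma keyC:
  assumes q: "quiver V A s t" and x: "x \<in> L_minus1 V A s t Z" and a: "a \<in> A" "s a = t a"
    and ba: "b \<noteq> a"
    and z: "b # replicate (Suc n) a \<in> Z" and b: "Inr (b # replicate n a) \<in> Bset V A s t Z"
  shows "of_nat (Suc n) * x (a, s a) = 0"
proof -
  have "psi1 V A s t Z x (b # replicate (Suc n) a, Inr (b # replicate n a))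
     = x (a, s a) * of_nat (occ_coeff (Bset V A s t Z) (b # replicate (Suc n) a) a (Inl (s a)) (Inr (b # replicate n a)))"
    by (rule psi1_single[OF q z b a]) (rule occ_cons_other[OF _ ba])
  also have "\<dots> = x (a, s a) * of_nat (Suc n)" using occ_cons[OF b ba] by (simp del: of_nat_Suc)
  finally show ?thesis using psi_zero[OF x] by (simp add: mult.commute del: of_nat_Suc)
qed

lemma sublist_rep_eq:
  assumes "sublist z (replicate k a)"
  shows "z = replicate (length z) a"
proof -
  have "set z \<subseteq> {a}" using set_mono_sublist[OF assms] by auto
  then show ?thesis by (metis replicate_length_same singletonD subsetD)
qed

lemma keyD:
  fixes V :: "'v set" and A :: "'a set"
  assumes q: "quiver V A s t" and mr: "minimal_relations A s t Z"
    and fin: "finite (Bset V A s t Z)" and a: "a \<in> A" "s a = t a"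
  shows "\<exists>n. replicate (Suc (Suc n)) a \<in> Z \<and> Inr (replicate (Suc n) a) \<in> Bset V A s t Z"
proof -
  let ?f = "\<lambda>n. (Inr (replicate (Suc n) a) :: 'v + 'a list)"
  have inj: "inj ?f" by (rule injI) simp
  have "\<not> range ?f \<subseteq> Bset V A s t Z"
  proof
    assume "range ?f \<subseteq> Bset V A s t Z"
    then have "finite (range ?f)" using fin finite_subset by blast
    then have "finite (UNIV :: nat set)" using finite_imageD[OF _ inj] by blast
    then show False by simp
  qed
  then obtain k where k: "?f k \<notin> Bset V A s t Z" by auto
  have qp: "qpath A s t (replicate (Suc k) a)" using qpath_rep[of a A s t] a by (simp del: replicate_Suc)
  then obtain z where z: "z \<in> Z" "sublist z (replicate (Suc k) a)"
    using k unfolding Bset_def by auto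
  have zr: "z = replicate (length z) a" by (rule sublist_rep_eq[OF z(2)])
  have "length z \<ge> 2" using mr z(1) unfolding minimal_relations_def by auto
  then obtain n where n: "length z = Suc (Suc n)" by (metis add_2_eq_Suc le_Suc_ex)
  have zZ: "replicate (Suc (Suc n)) a \<in> Z" using z(1) zr n by simp
  have "Inr (replicate (Suc n) a) \<in> Bset V A s t Z"
    unfolding Bset_def
  proof (rule UnI2, rule imageI, safe)
    show "qpath A s t (replicate (Suc n) a)" using qpath_rep[of a A s t] a by (simp del: replicate_Suc)
  next
    fix z' assume z': "z' \<in> Z" "sublist z' (replicate (Suc n) a)"
    have "sublist (replicate (Suc n) a) (replicate (Suc (Suc n)) a)"
      by (metis replicate_Suc sublist_Cons_right sublist_order.order.refl)
    then have "sublist z' (replicate (Suc (Suc n)) a)"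
      using z'(2) sublist_order.order.trans by blast
    moreover have "z' \<noteq> replicate (Suc (Suc n)) a"
      using sublist_length_le[OF z'(2)] by auto
    ultimately have "strict_sublist z' (replicate (Suc (Suc n)) a)"
      unfolding strict_sublist_def by simp
    then show False using mr z'(1) zZ unfolding minimal_relations_def by blast
  qed
  then show ?thesis using zZ by blast
qed

lemma rtrancl_leave:
  assumes "(u, v) \<in> R\<^sup>*" "u \<noteq> v"
  shows "\<exists>w. (u, w) \<in> R \<and> w \<noteq> u"
  using assms
proof (induction rule: rtrancl_induct)
  case base then show ?case by simp
next
  case (step y z)
  then show ?case by (cases "y = u") auto
qed

lemma keyE:
  assumes q: "quiver V A s t" and c: "connected_quiver V A s t" and a: "a \<in> A" "s a = t a"
    and nt: "\<not> (card V = 1 \<and> card A = 1 \<and> (\<forall>a\<in>A. is_loop A s t a))"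
  shows "\<exists>b\<in>A. b \<noteq> a \<and> (s b = s a \<or> t b = s a)"
proof (cases "\<exists>v\<in>V. v \<noteq> s a")
  case True
  then obtain v where v: "v \<in> V" "v \<noteq> s a" by blast
  have "s a \<in> V" using q a unfolding quiver_def by auto
  then have "(s a, v) \<in> ({(s a, t a) | a. a \<in> A} \<union> {(t a, s a) | a. a \<in> A})\<^sup>*"
    using c v unfolding connected_quiver_def by blast
  from rtrancl_leave[OF this v(2)[symmetric]] obtain w where
    w: "(s a, w) \<in> {(s a, t a) | a. a \<in> A} \<union> {(t a, s a) | a. a \<in> A}" "w \<noteq> s a" by blast
  from w(1) obtain b where b: "b \<in> A" "(s a = s b \<and> w = t b) \<or> (s a = t b \<and> w = s b)" by blast
  have "b \<noteq> a" using b(2) w(2) a(2) by auto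
  then show ?thesis using b by auto
next
  case False
  have sV: "s a \<in> V" using q a unfolding quiver_def by auto
  then have V: "V = {s a}" using False by blast
  have loops: "\<forall>c\<in>A. is_loop A s t c"
  proof
    fix c assume c: "c \<in> A"
    then have "s c \<in> V" "t c \<in> V" using q unfolding quiver_def by auto
    then show "is_loop A s t c" using c V unfolding is_loop_def by simp
  qed
  then have "card A \<noteq> 1" using nt V by simp
  then have "A \<noteq> {a}" by auto
  then obtain b where "b \<in> A" "b \<noteq> a" using a by blast
  moreover have "s b = s a" using q V \<open>b \<in> A\<close> unfolding quiver_def by auto
  ultimately show ?thesis by blast
qed


lemma B_short:
  assumes "Z = paths_of_length A s t m" "qpath A s t q" "length q < m"
  shows "Inr q \<in> Bset V A s t Z"
proof -
  have "\<forall>z\<in>Z. \<not> sublist z q"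
  proof
    fix z assume "z \<in> Z"
    then have "length z = m" using assms(1) unfolding paths_of_length_def by simp
    then show "\<not> sublist z q" using sublist_length_le[of z q] assms(3) by linarith
  qed
  then show ?thesis using assms(2) unfolding Bset_def by blast
qed

lemma in_Qm:
  assumes "Z = paths_of_length A s t m" "qpath A s t q" "length q = m"
  shows "q \<in> Z"
  using assms unfolding paths_of_length_def by simp

lemma trunc_case:
  fixes x :: "'a \<times> 'v \<Rightarrow> 'k::field"
  assumes q: "quiver V A s t" and x: "x \<in> L_minus1 V A s t Z" and a: "a \<in> A" "s a = t a"
    and Z: "Z = paths_of_length A s t (Suc (Suc n))"
  shows "of_nat (Suc (Suc n)) * x (a, s a) = 0"
proof (rule keyA[OF q x a])
  show "replicate (Suc (Suc n)) a \<in> Z"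
    by (rule in_Qm[OF Z]) (use qpath_rep[of a A s t] a in \<open>simp_all del: replicate_Suc\<close>)
  show "Inr (replicate (Suc n) a) \<in> Bset V A s t Z"
    by (rule B_short[OF Z]) (use qpath_rep[of a A s t] a in \<open>simp_all del: replicate_Suc\<close>)
qed

lemma trunc_case2:
  fixes x :: "'a \<times> 'v \<Rightarrow> 'k::field"
  assumes q: "quiver V A s t" and x: "x \<in> L_minus1 V A s t Z" and a: "a \<in> A" "s a = t a"
    and Z: "Z = paths_of_length A s t (Suc (Suc n))"
    and b: "b \<in> A" "b \<noteq> a" "s b = s a \<or> t b = s a"
  shows "of_nat (Suc n) * x (a, s a) = 0"
  using b(3)
proof
  assume sb: "s b = s a"
  show ?thesis
  proof (rule keyB[OF q x a b(2)])
    show "replicate (Suc n) a @ [b] \<in> Z"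
      by (rule in_Qm[OF Z]) (use qpath_rep_snoc[of a A s t b] a b sb in \<open>simp_all del: replicate_Suc\<close>)
    show "Inr (replicate n a @ [b]) \<in> Bset V A s t Z"
      by (rule B_short[OF Z]) (use qpath_rep_snoc[of a A s t b] a b sb in \<open>simp_all del: replicate_Suc\<close>)
  qed
next
  assume tb: "t b = s a"
  show ?thesis
  proof (rule keyC[OF q x a b(2)])
    show "b # replicate (Suc n) a \<in> Z"
      by (rule in_Qm[OF Z]) (use qpath_cons_rep[of a A s t b] a b tb in \<open>simp_all del: replicate_Suc\<close>)
    show "Inr (b # replicate n a) \<in> Bset V A s t Z"
      by (rule B_short[OF Z]) (use qpath_cons_rep[of a A s t b] a b tb in \<open>simp_all del: replicate_Suc\<close>)
  qed
qed

lemma nz_cancel: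
  fixes y :: "'k::field"
  assumes "of_nat m * y = 0" "\<not> CHAR('k) dvd m"
  shows "y = 0"
  using assms by (simp add: of_nat_eq_0_iff_char_dvd)

theorem proposition3p2:
  fixes V :: "'v set" and A :: "'a set" and s t :: "'a \<Rightarrow> 'v" and Z :: "'a list set"
  assumes "alg_closed TYPE('k::field)"
    and "quiver V A s t"
    and "minimal_relations A s t Z"
    and "finite (Bset V A s t Z)"
    and "connected_quiver V A s t"
    and "(\<not> (\<exists>a. is_loop A s t a))
       \<or> (\<forall>a m. is_loop A s t a \<and> m \<ge> 2 \<and> replicate m a \<in> Z
              \<and> Inr (replicate (m - 1) a) \<in> Bset V A s t Z \<longrightarrow> \<not> CHAR('k) dvd m)
       \<or> CHAR('k) = 0
       \<or> (\<exists>m\<ge>2. Z = paths_of_length A s t m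
              \<and> \<not> (card V = 1 \<and> card A = 1 \<and> (\<forall>a\<in>A. is_loop A s t a)))
       \<or> (card V = 1 \<and> card A = 1 \<and> (\<forall>a\<in>A. is_loop A s t a)
              \<and> (\<exists>m\<ge>2. Z = paths_of_length A s t m \<and> \<not> CHAR('k) dvd m))"
  shows "L_minus1 V A s t Z = {(\<lambda>_. 0 :: 'k)}"
proof -
  note q = assms(2) and mr = assms(3) and fin = assms(4) and con = assms(5) and h = assms(6)
  have zero_in: "(\<lambda>_. 0 :: 'k) \<in> L_minus1 V A s t Z"
    unfolding L_minus1_def kQ1Q0_def psi1_def by auto
  have all0: "x = (\<lambda>_. 0)" if x: "x \<in> L_minus1 V A s t Z" for x :: "'a \<times> 'v \<Rightarrow> 'k"
  proof -
    have loop0: "x (a, s a) = 0" if a: "a \<in> A" "s a = t a" for a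
    proof -
      have la: "is_loop A s t a" using a unfolding is_loop_def by simp
      have fromD: "x (a, s a) = 0" if nd: "\<And>n. replicate (Suc (Suc n)) a \<in> Z \<Longrightarrow>
              Inr (replicate (Suc n) a) \<in> Bset V A s t Z \<Longrightarrow> \<not> CHAR('k) dvd Suc (Suc n)"
      proof -
        obtain n where n: "replicate (Suc (Suc n)) a \<in> Z" "Inr (replicate (Suc n) a) \<in> Bset V A s t Z"
          using keyD[OF q mr fin a] by blast
        show ?thesis by (rule nz_cancel[OF keyA[OF q x a n] nd[OF n]])
      qed
      from h show ?thesis
      proof (elim disjE)
        assume "\<not> (\<exists>a. is_loop A s t a)" then show ?thesis using la by blast
      next
        assume h2: "\<forall>a m. is_loop A s t a \<and> m \<ge> 2 \<and> replicate m a \<in> Z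
              \<and> Inr (replicate (m - 1) a) \<in> Bset V A s t Z \<longrightarrow> \<not> CHAR('k) dvd m"
        show ?thesis
        proof (rule fromD)
          fix n assume "replicate (Suc (Suc n)) a \<in> Z" "Inr (replicate (Suc n) a) \<in> Bset V A s t Z"
          then have "is_loop A s t a \<and> Suc (Suc n) \<ge> 2 \<and> replicate (Suc (Suc n)) a \<in> Z
              \<and> Inr (replicate (Suc (Suc n) - 1) a) \<in> Bset V A s t Z" using la by simp
          then show "\<not> CHAR('k) dvd Suc (Suc n)" using h2 by blast
        qed
      next
        assume "CHAR('k) = 0"
        then show ?thesis by (intro fromD) simp
      next
        assume "\<exists>m\<ge>2. Z = paths_of_length A s t m
              \<and> \<not> (card V = 1 \<and> card A = 1 \<and> (\<forall>a\<in>A. is_loop A s t a))"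
        then obtain m where m: "m \<ge> 2" "Z = paths_of_length A s t m"
            and nt: "\<not> (card V = 1 \<and> card A = 1 \<and> (\<forall>a\<in>A. is_loop A s t a))" by blast
        obtain n where n: "m = Suc (Suc n)" using m(1) by (metis add_2_eq_Suc le_Suc_ex)
        obtain b where b: "b \<in> A" "b \<noteq> a" "s b = s a \<or> t b = s a"
          using keyE[OF q con a nt] by blast
        have e1: "of_nat (Suc (Suc n)) * x (a, s a) = 0"
          using trunc_case[OF q x a m(2)[unfolded n]] .
        have e2: "of_nat (Suc n) * x (a, s a) = 0"
          using trunc_case2[OF q x a m(2)[unfolded n] b] .
        have "x (a, s a) = of_nat (Suc (Suc n)) * x (a, s a) - of_nat (Suc n) * x (a, s a)"
          by (simp add: algebra_simps)
        also have "\<dots> = 0" by (simp only: e1 e2 diff_self)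
        finally show ?thesis .
      next
        assume "card V = 1 \<and> card A = 1 \<and> (\<forall>a\<in>A. is_loop A s t a)
              \<and> (\<exists>m\<ge>2. Z = paths_of_length A s t m \<and> \<not> CHAR('k) dvd m)"
        then obtain m where m: "m \<ge> 2" "Z = paths_of_length A s t m" "\<not> CHAR('k) dvd m" by blast
        obtain n where n: "m = Suc (Suc n)" using m(1) by (metis add_2_eq_Suc le_Suc_ex)
        show ?thesis
          by (rule nz_cancel[OF trunc_case[OF q x a m(2)[unfolded n]]]) (use m(3) n in simp)
      qed
    qed
    show ?thesis
    proof (rule ext)
      fix y :: "'a \<times> 'v"
      obtain c e where y: "y = (c, e)" by (cases y)
      show "x y = 0"
      proof (cases "y \<in> loop_pairs V A s t")
        case True
        then have "c \<in> A" "s c = t c" "e = s c" unfolding y loop_pairs_def by auto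
        then show ?thesis using loop0 y by simp
      next
        case False
        have "x \<in> kQ1Q0 V A s t" using x unfolding L_minus1_def by simp
        then show ?thesis using False unfolding kQ1Q0_def y by simp
      qed
    qed
  qed
  show ?thesis
  proof (rule equalityI)
    show "L_minus1 V A s t Z \<subseteq> {(\<lambda>_. 0 :: 'k)}"
    proof
      fix x :: "'a \<times> 'v \<Rightarrow> 'k" assume "x \<in> L_minus1 V A s t Z"
      then have "x = (\<lambda>_. 0)" by (rule all0)
      then show "x \<in> {(\<lambda>_. 0 :: 'k)}" by simp
    qed
    show "{(\<lambda>_. 0 :: 'k)} \<subseteq> L_minus1 V A s t Z" using zero_in by simp
  qed
qed

end
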